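(* Let $\mathbf{u}$ be a $C^1$ unit vector field on $\mathbb{R}^2$ whose integral curves are straight lines, i.e. $\mathbf{u}(\mathbf{x}+t\mathbf{u}(\mathbf{x}))=\mathbf{u}(\mathbf{x})$ for all $\mathbf{x}$ and $t\ge0$. Let $\mathbf{f}\in C^2_c(S^1;\mathbb{D})$. Then the data $\mathcal{L}_0\mathbf{f}$ and $\mathcal{L}_0^1\mathbf{f}$ are equivalent (each determines the other), and the data $\mathcal{T}_0\mathbf{f}$ and $\mathcal{T}_0^1\mathbf{f}$ are equivalent.
   Context: $\mathbb{D}$ is the open unit disc in $\mathbb{R}^2$; $C_c^2(S^1;\mathbb{D})$ is the space of $C^2$ vector fields on $\mathbb{R}^2$ with compact support in $\mathbb{D}$. For $\mathbf{a}=(a_1,a_2)$, $\mathbf{a}^\perp=(-a_2,a_1)$. Define $\mathcal{L}_0\mathbf{f}(\mathbf{x})=-\int_0^\infty \mathbf{u}(\mathbf{x})\cdot\mathbf{f}(\mathbf{x}+t\mathbf{u}(\mathbf{x}))\,dt$, $\mathcal{T}_0\mathbf{f}(\mathbf{x})=-\int_0^\infty \mathbf{u}^\perp(\mathbf{x})\cdot\mathbf{f}(\mathbf{x}+t\mathbf{u}(\mathbf{x}))\,dt$, and the first moments $\mathcal{L}^1_0\mathbf{f}(\mathbf{x})=-\int_0^\infty t\,\mathbf{u}(\mathbf{x})\cdot\mathbf{f}(\mathbf{x}+t\mathbf{u}(\mathbf{x}))\,dt$, $\mathcal{T}^1_0\mathbf{f}(\mathbf{x})=-\int_0^\infty t\,\mathbf{u}^\perp(\mathbf{x})\cdot\mathbf{f}(\mathbf{x}+t\mathbf{u}(\mathbf{x}))\,dt$.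 *)

theory Defs
  imports "HOL-Analysis.Analysis"
begin

type_synonym pt = "real \<times> real"

definition perp :: "pt \<Rightarrow> pt" where
  "perp a = (- snd a, fst a)"

definition C1_map :: "('a::real_normed_vector \<Rightarrow> 'b::real_normed_vector) \<Rightarrow> bool" where
  "C1_map f \<longleftrightarrow> (\<exists>Df :: 'a \<Rightarrow> ('a \<Rightarrow>\<^sub>L 'b).
      (\<forall>x. (f has_derivative blinfun_apply (Df x)) (at x)) \<and> continuous_on UNIV Df)"

definition C2_map :: "('a::real_normed_vector \<Rightarrow> 'b::real_normed_vector) \<Rightarrow> bool" where
  "C2_map f \<longleftrightarrow> (\<exists>Df :: 'a \<Rightarrow> ('a \<Rightarrow>\<^sub>L 'b).
      (\<forall>x. (f has_derivative blinfun_apply (Df x)) (at x)) \<and> C1_map Df)"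

definition C2c_disc :: "(pt \<Rightarrow> pt) \<Rightarrow> bool" where
  "C2c_disc f \<longleftrightarrow> C2_map f \<and> compact (closure {x. f x \<noteq> 0})
      \<and> closure {x. f x \<noteq> 0} \<subseteq> ball 0 1"

definition L0 :: "(pt \<Rightarrow> pt) \<Rightarrow> (pt \<Rightarrow> pt) \<Rightarrow> pt \<Rightarrow> real" where
  "L0 u f x = - integral {0..} (\<lambda>t. u x \<bullet> f (x + t *\<^sub>R u x))"

definition T0 :: "(pt \<Rightarrow> pt) \<Rightarrow> (pt \<Rightarrow> pt) \<Rightarrow> pt \<Rightarrow> real" where
  "T0 u f x = - integral {0..} (\<lambda>t. perp (u x) \<bullet> f (x + t *\<^sub>R u x))"

definition L1 :: "(pt \<Rightarrow> pt) \<Rightarrow> (pt \<Rightarrow> pt) \<Rightarrow> pt \<Rightarrow> real" where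
  "L1 u f x = - integral {0..} (\<lambda>t. t * (u x \<bullet> f (x + t *\<^sub>R u x)))"

definition T1 :: "(pt \<Rightarrow> pt) \<Rightarrow> (pt \<Rightarrow> pt) \<Rightarrow> pt \<Rightarrow> real" where
  "T1 u f x = - integral {0..} (\<lambda>t. t * (perp (u x) \<bullet> f (x + t *\<^sub>R u x)))"

end

theory Submission
  imports Defs
begin


lemma zero_deriv:
  fixes H :: "real \<Rightarrow> real"
  assumes "(H has_real_derivative D) (at 0 within {0..R})" "0 < R" "\<forall>s\<in>{0..R}. H s = 0"
  shows "D = 0"
proof -
  have "((\<lambda>_. 0) has_real_derivative D) (at 0 within {0..R})"
    using has_field_derivative_transform_within[OF assms(1) zero_less_one, of "\<lambda>_. 0"] assms by auto
  then have a: "((\<lambda>_. 0::real) has_vector_derivative D) (at 0 within cbox 0 R)"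
    by (simp add: has_real_derivative_iff_has_vector_derivative)
  have b: "((\<lambda>_. 0::real) has_vector_derivative 0) (at 0 within cbox 0 R)"
    by (rule derivative_eq_intros) auto
  show ?thesis using vector_derivative_unique_within_closed_interval[OF _ _ a b] assms by auto
qed

lemma key1:
  fixes \<psi> :: "real \<Rightarrow> real"
  assumes "continuous_on UNIV \<psi>" "0 < R" "\<forall>s\<in>{0..R}. integral {s..R} \<psi> = 0"
  shows "\<psi> 0 = 0"
proof -
  have "((\<lambda>x. integral {x..R} \<psi>) has_real_derivative - \<psi> 0) (at 0 within {0..R})"
    by (rule integral_has_real_derivative') (use assms in \<open>auto intro: continuous_on_subset\<close>)
  from zero_deriv[OF this] assms show ?thesis by auto
qed

lemma key2:
  fixes \<psi> :: "real \<Rightarrow> real"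
  assumes c: "continuous_on UNIV \<psi>" and R: "0 < R"
    and z: "\<forall>s\<in>{0..R}. integral {s..R} (\<lambda>\<tau>. (\<tau> - s) * \<psi> \<tau>) = 0"
  shows "integral {0..R} \<psi> = 0"
proof -
  have c1: "continuous_on {0..R} \<psi>" using c continuous_on_subset by blast
  have c2: "continuous_on {0..R} (\<lambda>\<tau>. \<tau> * \<psi> \<tau>)" by (intro continuous_intros c1)
  define H where "H s = integral {s..R} (\<lambda>\<tau>. \<tau> * \<psi> \<tau>) - s * integral {s..R} \<psi>" for s
  have Hz: "\<forall>s\<in>{0..R}. H s = 0"
  proof
    fix s assume s: "s \<in> {0..R}"
    have i1: "\<psi> integrable_on {s..R}"
      by (rule integrable_continuous_real) (use c continuous_on_subset in blast)
    have i2: "(\<lambda>\<tau>. \<tau> * \<psi> \<tau>) integrable_on {s..R}"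
      by (rule integrable_continuous_real) (intro continuous_intros; use c continuous_on_subset in blast)
    have i3: "(\<lambda>\<tau>. s * \<psi> \<tau>) integrable_on {s..R}"
      by (rule integrable_continuous_real) (intro continuous_intros; use c continuous_on_subset in blast)
    have "integral {s..R} (\<lambda>\<tau>. (\<tau> - s) * \<psi> \<tau>) = integral {s..R} (\<lambda>\<tau>. \<tau> * \<psi> \<tau> - s * \<psi> \<tau>)"
      by (simp add: algebra_simps)
    also have "\<dots> = H s"
      unfolding H_def using i1 i2 i3 by (simp add: integral_diff)
    finally show "H s = 0" using z s by simp
  qed
  have P: "((\<lambda>x. integral {x..R} \<psi>) has_real_derivative - \<psi> 0) (at 0 within {0..R})"
    by (rule integral_has_real_derivative'[OF c1]) (use R in auto)
  have Q: "((\<lambda>x. integral {x..R} (\<lambda>\<tau>. \<tau> * \<psi> \<tau>)) has_real_derivative - (0 * \<psi> 0)) (at 0 within {0..R})"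
    by (rule integral_has_real_derivative'[OF c2]) (use R in auto)
  have M: "((\<lambda>x. x * integral {x..R} \<psi>) has_real_derivative (1 * integral {0..R} \<psi> + (- \<psi> 0) * 0)) (at 0 within {0..R})"
    by (rule DERIV_mult[OF DERIV_ident P])
  have HD: "(H has_real_derivative (- (0 * \<psi> 0) - (1 * integral {0..R} \<psi> + (- \<psi> 0) * 0))) (at 0 within {0..R})"
    unfolding H_def by (rule DERIV_diff[OF Q M])
  show ?thesis using zero_deriv[OF HD R Hz] by simp
qed

lemma tail:
  fixes \<psi> :: "real \<Rightarrow> real"
  assumes c: "continuous_on UNIV \<psi>" and z: "\<forall>\<tau>\<ge>R. \<psi> \<tau> = 0" and s: "0 \<le> s" "s \<le> R"
  shows "((\<lambda>t. \<psi> (s + t)) has_integral integral {s..R} \<psi>) {0..}"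
proof -
  have "(\<psi> has_integral integral {s..R} \<psi>) {s..R}"
    by (rule integrable_integral, rule integrable_continuous_real) (use c continuous_on_subset in blast)
  from has_integral_shift_real_ivl[OF this, of s]
  have "((\<lambda>x. \<psi> (x + s)) has_integral integral {s..R} \<psi>) {0..R - s}" by simp
  then have A: "((\<lambda>x. if x \<in> {0..R - s} then \<psi> (x + s) else 0) has_integral integral {s..R} \<psi>) {0..}"
    by (subst has_integral_restrict) auto
  have eq: "\<And>x. x \<in> {0..} \<Longrightarrow> (if x \<in> {0..R - s} then \<psi> (x + s) else 0) = \<psi> (s + x)"
    using z by (auto simp: add.commute)
  show ?thesis by (rule iffD1[OF has_integral_cong[OF eq] A])
qed

definition phi :: "(pt \<Rightarrow> pt) \<Rightarrow> (pt \<Rightarrow> pt) \<Rightarrow> (pt \<Rightarrow> pt) \<Rightarrow> pt \<Rightarrow> real \<Rightarrow> real" where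
  "phi u W F x \<tau> = W x \<bullet> F (x + \<tau> *\<^sub>R u x)"

lemma phi_cont:
  assumes "continuous_on UNIV F"
  shows "continuous_on UNIV (phi u W F x)"
  unfolding phi_def
  by (intro continuous_intros continuous_on_compose2[OF assms]) auto

lemma phi_zero:
  assumes "\<forall>x. norm (u x) = 1" "\<forall>y. 1 \<le> norm y \<longrightarrow> F y = 0"
  shows "\<forall>\<tau>\<ge>norm x + 1. phi u W F x \<tau> = 0"
proof (intro allI impI)
  fix \<tau> :: real assume t: "norm x + 1 \<le> \<tau>"
  have "norm (\<tau> *\<^sub>R u x) = \<tau>" proof -
    have ux: "norm (u x) = 1" using assms(1) by blast
    have "0 \<le> \<tau>" using t norm_ge_zero[of x] by linarith
    then show ?thesis using ux by simp
  qed
  moreover have "norm (\<tau> *\<^sub>R u x) - norm x \<le> norm (x + \<tau> *\<^sub>R u x)"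
    by (metis add.commute norm_diff_ineq)
  ultimately have "1 \<le> norm (x + \<tau> *\<^sub>R u x)" using t by linarith
  then have "F (x + \<tau> *\<^sub>R u x) = 0" using assms(2) by blast
  then show "phi u W F x \<tau> = 0" by (simp add: phi_def)
qed


lemma shift_eq:
  fixes u W F G :: "pt \<Rightarrow> pt"
  assumes inv: "\<forall>x. \<forall>t\<ge>0. u (x + t *\<^sub>R u x) = u x"
    and Winv: "\<forall>x. \<forall>t\<ge>0. W (x + t *\<^sub>R u x) = W x" and s: "0 \<le> s"
  shows "W (x + s *\<^sub>R u x) \<bullet> F ((x + s *\<^sub>R u x) + t *\<^sub>R u (x + s *\<^sub>R u x)) = phi u W F x (s + t)"
proof -
  have "u (x + s *\<^sub>R u x) = u x" "W (x + s *\<^sub>R u x) = W x" using inv Winv s by blast+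
  then show ?thesis by (simp add: phi_def scaleR_add_left add.assoc)
qed

lemma AB_eq:
  fixes u W F G :: "pt \<Rightarrow> pt"
  assumes un: "\<forall>x. norm (u x) = 1"
    and inv: "\<forall>x. \<forall>t\<ge>0. u (x + t *\<^sub>R u x) = u x"
    and Winv: "\<forall>x. \<forall>t\<ge>0. W (x + t *\<^sub>R u x) = W x"
    and cF: "continuous_on UNIV F" and zF: "\<forall>y. 1 \<le> norm y \<longrightarrow> F y = 0"
    and s: "0 \<le> s" "s \<le> norm x + 1"
  shows "integral {0..} (\<lambda>t. W (x + s *\<^sub>R u x) \<bullet> F ((x + s *\<^sub>R u x) + t *\<^sub>R u (x + s *\<^sub>R u x)))
           = integral {s..norm x + 1} (phi u W F x)"
    and "integral {0..} (\<lambda>t. t * (W (x + s *\<^sub>R u x) \<bullet> F ((x + s *\<^sub>R u x) + t *\<^sub>R u (x + s *\<^sub>R u x))))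
           = integral {s..norm x + 1} (\<lambda>\<tau>. (\<tau> - s) * phi u W F x \<tau>)"
proof -
  have c: "continuous_on UNIV (phi u W F x)" by (rule phi_cont[OF cF])
  have z: "\<forall>\<tau>\<ge>norm x + 1. phi u W F x \<tau> = 0" by (rule phi_zero[OF un zF])
  show "integral {0..} (\<lambda>t. W (x + s *\<^sub>R u x) \<bullet> F ((x + s *\<^sub>R u x) + t *\<^sub>R u (x + s *\<^sub>R u x)))
           = integral {s..norm x + 1} (phi u W F x)"
    unfolding shift_eq[OF inv Winv s(1)]
    by (rule integral_unique[OF tail[OF c z s]])
  have c2: "continuous_on UNIV (\<lambda>\<tau>. (\<tau> - s) * phi u W F x \<tau>)" by (intro continuous_intros c)
  have z2: "\<forall>\<tau>\<ge>norm x + 1. (\<tau> - s) * phi u W F x \<tau> = 0" using z by simp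
  show "integral {0..} (\<lambda>t. t * (W (x + s *\<^sub>R u x) \<bullet> F ((x + s *\<^sub>R u x) + t *\<^sub>R u (x + s *\<^sub>R u x))))
           = integral {s..norm x + 1} (\<lambda>\<tau>. (\<tau> - s) * phi u W F x \<tau>)"
    unfolding shift_eq[OF inv Winv s(1)]
    using integral_unique[OF tail[OF c2 z2 s]] by simp
qed

lemma main_equiv:
  fixes u W F G :: "pt \<Rightarrow> pt"
  assumes un: "\<forall>x. norm (u x) = 1"
    and inv: "\<forall>x. \<forall>t\<ge>0. u (x + t *\<^sub>R u x) = u x"
    and Winv: "\<forall>x. \<forall>t\<ge>0. W (x + t *\<^sub>R u x) = W x"
    and cF: "continuous_on UNIV F" and zF: "\<forall>y. 1 \<le> norm y \<longrightarrow> F y = 0"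
    and cG: "continuous_on UNIV G" and zG: "\<forall>y. 1 \<le> norm y \<longrightarrow> G y = 0"
  shows "(\<forall>x. integral {0..} (\<lambda>t. W x \<bullet> F (x + t *\<^sub>R u x)) = integral {0..} (\<lambda>t. W x \<bullet> G (x + t *\<^sub>R u x)))
     \<longleftrightarrow> (\<forall>x. integral {0..} (\<lambda>t. t * (W x \<bullet> F (x + t *\<^sub>R u x))) = integral {0..} (\<lambda>t. t * (W x \<bullet> G (x + t *\<^sub>R u x))))"
proof
  assume A: "\<forall>x. integral {0..} (\<lambda>t. W x \<bullet> F (x + t *\<^sub>R u x)) = integral {0..} (\<lambda>t. W x \<bullet> G (x + t *\<^sub>R u x))"
  have pt: "W x \<bullet> F x = W x \<bullet> G x" for x
  proof -
    define R where "R = norm x + 1"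
    have R: "0 < R" unfolding R_def by (simp add: add_nonneg_pos)
    have cD: "continuous_on UNIV (\<lambda>\<tau>. phi u W F x \<tau> - phi u W G x \<tau>)"
      by (intro continuous_intros phi_cont cF cG)
    have "\<forall>s\<in>{0..R}. integral {s..R} (\<lambda>\<tau>. phi u W F x \<tau> - phi u W G x \<tau>) = 0"
    proof
      fix s assume s: "s \<in> {0..R}"
      have i: "phi u W H x integrable_on {s..R}" if "continuous_on UNIV H" for H
        by (rule integrable_continuous_real) (use phi_cont[OF that] continuous_on_subset in blast)
      have "integral {s..R} (\<lambda>\<tau>. phi u W F x \<tau> - phi u W G x \<tau>)
          = integral {s..R} (phi u W F x) - integral {s..R} (phi u W G x)"
        by (rule integral_diff[OF i[OF cF] i[OF cG]])
      also have "\<dots> = 0"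
        using A[rule_format, of "x + s *\<^sub>R u x"] AB_eq(1)[OF un inv Winv cF zF, of s x] AB_eq(1)[OF un inv Winv cG zG, of s x] s
        unfolding R_def by simp
      finally show "integral {s..R} (\<lambda>\<tau>. phi u W F x \<tau> - phi u W G x \<tau>) = 0" .
    qed
    from key1[OF cD R this] show ?thesis by (simp add: phi_def)
  qed
  show "\<forall>x. integral {0..} (\<lambda>t. t * (W x \<bullet> F (x + t *\<^sub>R u x))) = integral {0..} (\<lambda>t. t * (W x \<bullet> G (x + t *\<^sub>R u x)))"
  proof
    fix x :: pt
    have "W x \<bullet> F (x + t *\<^sub>R u x) = W x \<bullet> G (x + t *\<^sub>R u x)" if "t \<in> {0..}" for t
      proof -
        have "W (x + t *\<^sub>R u x) = W x" using Winv that by (metis atLeast_iff)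
        then show ?thesis using pt[of "x + t *\<^sub>R u x"] by simp
      qed
    then show "integral {0..} (\<lambda>t. t * (W x \<bullet> F (x + t *\<^sub>R u x))) = integral {0..} (\<lambda>t. t * (W x \<bullet> G (x + t *\<^sub>R u x)))"
      by (intro integral_cong) auto
  qed
next
  assume B: "\<forall>x. integral {0..} (\<lambda>t. t * (W x \<bullet> F (x + t *\<^sub>R u x))) = integral {0..} (\<lambda>t. t * (W x \<bullet> G (x + t *\<^sub>R u x)))"
  show "\<forall>x. integral {0..} (\<lambda>t. W x \<bullet> F (x + t *\<^sub>R u x)) = integral {0..} (\<lambda>t. W x \<bullet> G (x + t *\<^sub>R u x))"
  proof
    fix x :: pt
    define R where "R = norm x + 1"
    have R: "0 < R" unfolding R_def by (simp add: add_nonneg_pos)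
    have cD: "continuous_on UNIV (\<lambda>\<tau>. phi u W F x \<tau> - phi u W G x \<tau>)"
      by (intro continuous_intros phi_cont cF cG)
    have i: "phi u W H x integrable_on {s..R}" if "continuous_on UNIV H" for H s
      by (rule integrable_continuous_real) (use phi_cont[OF that] continuous_on_subset in blast)
    have i2: "(\<lambda>\<tau>. (\<tau> - s) * phi u W H x \<tau>) integrable_on {s..R}" if "continuous_on UNIV H" for H s
      by (rule integrable_continuous_real) (intro continuous_intros; use phi_cont[OF that] continuous_on_subset in blast)
    have "\<forall>s\<in>{0..R}. integral {s..R} (\<lambda>\<tau>. (\<tau> - s) * (phi u W F x \<tau> - phi u W G x \<tau>)) = 0"
    proof
      fix s assume s: "s \<in> {0..R}"
      have "integral {s..R} (\<lambda>\<tau>. (\<tau> - s) * (phi u W F x \<tau> - phi u W G x \<tau>))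
          = integral {s..R} (\<lambda>\<tau>. (\<tau> - s) * phi u W F x \<tau> - (\<tau> - s) * phi u W G x \<tau>)"
        by (simp add: right_diff_distrib)
      also have "\<dots> = integral {s..R} (\<lambda>\<tau>. (\<tau> - s) * phi u W F x \<tau>) - integral {s..R} (\<lambda>\<tau>. (\<tau> - s) * phi u W G x \<tau>)"
        by (rule integral_diff[OF i2[OF cF] i2[OF cG]])
      also have "\<dots> = 0"
        using B[rule_format, of "x + s *\<^sub>R u x"] AB_eq(2)[OF un inv Winv cF zF, of s x] AB_eq(2)[OF un inv Winv cG zG, of s x] s
        unfolding R_def by simp
      finally show "integral {s..R} (\<lambda>\<tau>. (\<tau> - s) * (phi u W F x \<tau> - phi u W G x \<tau>)) = 0" .
    qed
    from key2[OF cD R this]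
    have "integral {0..R} (phi u W F x) - integral {0..R} (phi u W G x) = 0"
      using integral_diff[OF i[OF cF, of 0] i[OF cG, of 0]] by simp
    then show "integral {0..} (\<lambda>t. W x \<bullet> F (x + t *\<^sub>R u x)) = integral {0..} (\<lambda>t. W x \<bullet> G (x + t *\<^sub>R u x))"
      using AB_eq(1)[OF un inv Winv cF zF, of 0 x] AB_eq(1)[OF un inv Winv cG zG, of 0 x] R
      unfolding R_def by simp
  qed
qed


lemma C2c_props:
  assumes "C2c_disc f"
  shows "continuous_on UNIV f" "\<forall>y. 1 \<le> norm y \<longrightarrow> f y = 0"
proof -
  from assms obtain Df where "\<forall>x. (f has_derivative blinfun_apply (Df x)) (at x)"
    unfolding C2c_disc_def C2_map_def by blast
  then show "continuous_on UNIV f"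
    by (meson continuous_at_imp_continuous_on has_derivative_continuous)
  show "\<forall>y. 1 \<le> norm y \<longrightarrow> f y = 0"
  proof (intro allI impI)
    fix y :: pt assume "1 \<le> norm y"
    then have "y \<notin> closure {x. f x \<noteq> 0}" using assms unfolding C2c_disc_def by auto
    moreover have "{x. f x \<noteq> 0} \<subseteq> closure {x. f x \<noteq> 0}" by (rule closure_subset)
    ultimately show "f y = 0" by (meson mem_Collect_eq subsetD)
  qed
qed

theorem lemma4p1:
  fixes u :: "pt \<Rightarrow> pt"
  assumes "C1_map u"
    and "\<forall>x. norm (u x) = 1"
    and "\<forall>x. \<forall>t\<ge>0. u (x + t *\<^sub>R u x) = u x"
  shows "\<forall>f g. C2c_disc f \<longrightarrow> C2c_disc g \<longrightarrow>
           ((L0 u f = L0 u g \<longleftrightarrow> L1 u f = L1 u g) \<and>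
            (T0 u f = T0 u g \<longleftrightarrow> T1 u f = T1 u g))"
proof (intro allI impI)
  fix f g assume f: "C2c_disc f" and g: "C2c_disc g"
  have Pinv: "\<forall>x. \<forall>t\<ge>0. (\<lambda>x. perp (u x)) (x + t *\<^sub>R u x) = (\<lambda>x. perp (u x)) x"
    using assms(3) by simp
  note E1 = main_equiv[OF assms(2) assms(3) assms(3) C2c_props(1)[OF f] C2c_props(2)[OF f]
      C2c_props(1)[OF g] C2c_props(2)[OF g]]
  note E2 = main_equiv[OF assms(2) assms(3) Pinv C2c_props(1)[OF f] C2c_props(2)[OF f]
      C2c_props(1)[OF g] C2c_props(2)[OF g]]
  show "(L0 u f = L0 u g \<longleftrightarrow> L1 u f = L1 u g) \<and> (T0 u f = T0 u g \<longleftrightarrow> T1 u f = T1 u g)"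
    using E1 E2 unfolding L0_def L1_def T0_def T1_def fun_eq_iff by simp
qed

end
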